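(* Let $p\ge 0$ and $n\ge 1$. A permutation $\sigma$ of $[n]$ belongs to the basis $\mathcal{B}_p$ if and only if all of the following hold: (i) $\sigma$ has exactly $p+1$ non-left-to-right-maxima; (ii) the value $n-1$ is a non-left-to-right-maximum of $\sigma$; (iii) $\sigma_2$ is a non-left-to-right-maximum of $\sigma$; (iv) for any three left-to-right maxima $\sigma_i,\sigma_j,\sigma_k$ with $i<j<k$ such that no other left-to-right maximum lies at a position strictly between $i$ and $k$, there exists a non-left-to-right-maximum $\sigma_t$ with $j<t<k$ and $\sigma_t>\sigma_i$.
   Context: Permutations of $[n]$ are written as words $\sigma=\sigma_1\cdots\sigma_n$. A right-jump transforms $\sigma$ into $\sigma_1\cdots\sigma_{i-1}\sigma_{i+1}\cdots\sigma_j\sigma_i\sigma_{j+1}\cdots\sigma_n$ for some $1\le i<j\le n$. A left-to-right maximum of $\sigma$ is an entry $\sigma_i$ such that $\sigma_k<\sigma_i$ for all $k<i$; every other entry is a non-left-to-right-maximum. A permutation $\pi$ of $[k]$ is a pattern of $\sigma$ (written $\pi\prec\sigma$) if some subsequence $\sigma_{i_1}\cdots\sigma_{i_k}$ ($i_1<\dots<i_k$) is order-isomorphic to $\pi$. $\mathcal{C}_p$ is the set of all permutations (of any length $n$) obtainable from the identity $12\cdots n$ by at most $p$ right-jumps; it is closed under taking patterns. The basis $\mathcal{B}_p$ is the set of permutations $\sigma\notin\mathcal{C}_p$ such that every pattern $\pi\prec\sigma$ with $\pi\ne\sigma$ lies in $\mathcal{C}_p$; then $\mathcal{C}_p$ is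 exactly the set of permutations avoiding every element of $\mathcal{B}_p$. *)

theory Defs
  imports Main
begin

text \<open>Permutations of [n] are lists of length n with entry set {1..n}.
  Positions in lists are 0-indexed (position i of the list = position i+1 of the paper).\<close>

definition is_perm :: "nat \<Rightarrow> nat list \<Rightarrow> bool" where
  "is_perm n \<sigma> \<longleftrightarrow> length \<sigma> = n \<and> distinct \<sigma> \<and> set \<sigma> = {1..n}"

text \<open>Right-jump moving the entry at 0-indexed position i to just after position j (i < j).\<close>
definition right_jump :: "nat list \<Rightarrow> nat \<Rightarrow> nat \<Rightarrow> nat list" where
  "right_jump \<sigma> i j = take i \<sigma> @ take (j - i) (drop (Suc i) \<sigma>) @ [\<sigma> ! i] @ drop (Suc j) \<sigma>"

definition rj_step :: "nat list \<Rightarrow> nat list \<Rightarrow> bool" where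
  "rj_step \<sigma> \<tau> \<longleftrightarrow> (\<exists>i j. i < j \<and> j < length \<sigma> \<and> \<tau> = right_jump \<sigma> i j)"

definition Cp :: "nat \<Rightarrow> nat list set" where
  "Cp p = {\<sigma>. \<exists>n k. k \<le> p \<and> (rj_step ^^ k) [1..<Suc n] \<sigma>}"

definition order_iso :: "nat list \<Rightarrow> nat list \<Rightarrow> bool" where
  "order_iso \<pi> \<tau> \<longleftrightarrow> length \<pi> = length \<tau> \<and>
     (\<forall>a < length \<pi>. \<forall>b < length \<pi>. \<pi> ! a < \<pi> ! b \<longleftrightarrow> \<tau> ! a < \<tau> ! b)"

definition is_pattern :: "nat list \<Rightarrow> nat list \<Rightarrow> bool" where
  "is_pattern \<pi> \<sigma> \<longleftrightarrow> is_perm (length \<pi>) \<pi> \<and> (\<exists>I. order_iso \<pi> (nths \<sigma> I))"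

definition basis :: "nat \<Rightarrow> nat list set" where
  "basis p = {\<sigma>. is_perm (length \<sigma>) \<sigma> \<and> \<sigma> \<notin> Cp p \<and>
      (\<forall>\<pi>. is_pattern \<pi> \<sigma> \<and> \<pi> \<noteq> \<sigma> \<longrightarrow> \<pi> \<in> Cp p)}"

definition ltr_max :: "nat list \<Rightarrow> nat \<Rightarrow> bool" where
  "ltr_max \<sigma> i \<longleftrightarrow> (\<forall>k < i. \<sigma> ! k < \<sigma> ! i)"

end

theory Submission
  imports Defs
begin

fun nlf :: "nat set \<Rightarrow> nat list \<Rightarrow> nat" where
  "nlf M [] = 0"
| "nlf M (y#ys) = (if \<exists>z\<in>M. y \<le> z then 1 else 0) + nlf (insert y M) ys"

definition nl :: "nat list \<Rightarrow> nat" where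
  "nl xs = card {i. i < length xs \<and> \<not> ltr_max xs i}"

lemma nlf_append: "nlf M (xs @ ys) = nlf M xs + nlf (M \<union> set xs) ys"
  by (induction xs arbitrary: M) auto

lemma nlf_mono: "M \<subseteq> M' \<Longrightarrow> nlf M ys \<le> nlf M' ys"
proof (induction ys arbitrary: M M')
  case (Cons y ys)
  have "nlf (insert y M) ys \<le> nlf (insert y M') ys" using Cons by (meson insert_mono)
  then show ?case using Cons.prems by auto
qed simp

lemma not_ltr: "\<not> ltr_max xs i \<longleftrightarrow> (\<exists>k<i. xs ! i \<le> xs ! k)"
  unfolding ltr_max_def by auto

lemma nl_snoc: "nl (xs @ [x]) = nl xs + (if \<exists>z\<in>set xs. x \<le> z then 1 else 0)"
proof -
  have A: "{i. i < length (xs@[x]) \<and> \<not> ltr_max (xs@[x]) i} =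
     {i. i < length xs \<and> \<not> ltr_max xs i} \<union> (if \<exists>z\<in>set xs. x \<le> z then {length xs} else {})"
  proof -
    have "i < length xs \<Longrightarrow> ltr_max (xs@[x]) i = ltr_max xs i" for i
      unfolding ltr_max_def by (auto simp: nth_append)
    moreover have "ltr_max (xs@[x]) (length xs) \<longleftrightarrow> \<not>(\<exists>z\<in>set xs. x \<le> z)"
      unfolding ltr_max_def by (simp add: nth_append not_le all_set_conv_all_nth)
    ultimately show ?thesis by (auto simp: less_Suc_eq)
  qed
  show ?thesis unfolding nl_def A by (auto simp: card_insert_if)
qed

lemma nl_Nil[simp]: "nl [] = 0" by (simp add: nl_def)

lemma nlf_snoc: "nlf M (xs @ [x]) = nlf M xs + (if \<exists>z\<in>M \<union> set xs. x \<le> z then 1 else 0)"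
  by (simp add: nlf_append)

lemma nl_nlf: "nl xs = nlf {} xs"
  by (induction xs rule: rev_induct) (auto simp: nl_snoc nlf_snoc)

definition W :: "nat list \<Rightarrow> nat set \<Rightarrow> nat set" where
  "W xs I = {i\<in>I. i < length xs \<and> (\<exists>j\<in>I. j < i \<and> xs ! i \<le> xs ! j)}"

lemma W_mono: "I \<subseteq> J \<Longrightarrow> W xs I \<subseteq> W xs J"
  unfolding W_def by blast

lemma W_finite: "finite (W xs I)"
  unfolding W_def by (rule finite_subset[of _ "{..<length xs}"]) auto

lemma W_mem: "i \<in> W (xs@[x]) I \<longleftrightarrow> (i \<in> W xs I \<or> (i = length xs \<and> length xs \<in> I \<and> (\<exists>j\<in>I. j < length xs \<and> x \<le> xs!j)))"
proof (cases "i < length xs")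
  case True
  have e: "\<And>j. j < i \<Longrightarrow> (xs@[x])!j = xs!j" using True by (simp add: nth_append)
  have "(\<exists>j\<in>I. j < i \<and> (xs@[x]) ! i \<le> (xs@[x]) ! j) \<longleftrightarrow> (\<exists>j\<in>I. j < i \<and> xs ! i \<le> xs ! j)"
    using e True by (metis nth_append_left)
  then show ?thesis using True unfolding W_def by auto
next
  case False
  show ?thesis
  proof (cases "i = length xs")
    case True
    have e: "\<And>j. j < i \<Longrightarrow> (xs@[x])!j = xs!j" using True by (simp add: nth_append)
    have "(\<exists>j\<in>I. j < i \<and> (xs@[x]) ! i \<le> (xs@[x]) ! j) \<longleftrightarrow> (\<exists>j\<in>I. j < length xs \<and> x \<le> xs ! j)"
      using e True by auto
    then show ?thesis using True unfolding W_def by auto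
  next
    case False
    then show ?thesis using \<open>\<not> i < length xs\<close> unfolding W_def by auto
  qed
qed

lemma W_snoc: "W (xs@[x]) I = W xs I \<union> (if length xs \<in> I \<and> (\<exists>j\<in>I. j < length xs \<and> x \<le> xs ! j) then {length xs} else {})"
  by (rule set_eqI) (simp only: W_mem, auto)

lemma nl_nths: "nl (nths xs I) = card (W xs I)"
proof (induction xs rule: rev_induct)
  case Nil then show ?case by (simp add: W_def)
next
  case (snoc x xs)
  have N: "nths (xs @ [x]) I = nths xs I @ nths [x] {j. j + length xs \<in> I}"
    by (rule nths_append)
  have nin: "length xs \<notin> W xs I" unfolding W_def by auto
  have S: "(\<exists>z\<in>set (nths xs I). x \<le> z) \<longleftrightarrow> (\<exists>j\<in>I. j < length xs \<and> x \<le> xs ! j)"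
    unfolding set_nths by blast
  show ?case
  proof (cases "length xs \<in> I")
    case True
    then have N2: "nths (xs @ [x]) I = nths xs I @ [x]" using N by simp
    have "nl (nths (xs @ [x]) I) = card (W xs I) + (if \<exists>j\<in>I. j < length xs \<and> x \<le> xs ! j then 1 else 0)"
      unfolding N2 nl_snoc snoc.IH S ..
    also have "\<dots> = card (W (xs@[x]) I)"
      unfolding W_snoc using True nin W_finite[of xs I] by (simp add: card_insert_if)
    finally show ?thesis .
  next
    case False
    then have N2: "nths (xs @ [x]) I = nths xs I" using N by simp
    show ?thesis unfolding N2 W_snoc snoc.IH using False by simp
  qed
qed

lemma W_UNIV: "W xs UNIV = {i. i < length xs \<and> \<not> ltr_max xs i}"
  unfolding W_def not_ltr by auto

lemma nl_W: "nl xs = card (W xs UNIV)"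
  by (simp add: nl_def W_UNIV)

lemma iso_ltr: "order_iso \<pi> \<tau> \<Longrightarrow> i < length \<pi> \<Longrightarrow> ltr_max \<pi> i = ltr_max \<tau> i"
proof -
  assume a: "order_iso \<pi> \<tau>" and i: "i < length \<pi>"
  have eq: "\<And>k. k < i \<Longrightarrow> (\<pi>!k < \<pi>!i) = (\<tau>!k < \<tau>!i)"
  proof -
    fix k assume "k < i"
    then have "k < length \<pi>" using i by simp
    then show "(\<pi>!k < \<pi>!i) = (\<tau>!k < \<tau>!i)" using a i unfolding order_iso_def by blast
  qed
  show ?thesis unfolding ltr_max_def using eq by auto
qed

lemma iso_nl: "order_iso \<pi> \<tau> \<Longrightarrow> nl \<pi> = nl \<tau>"
proof -
  assume a: "order_iso \<pi> \<tau>"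
  have "{i. i < length \<pi> \<and> \<not> ltr_max \<pi> i} = {i. i < length \<tau> \<and> \<not> ltr_max \<tau> i}"
    using iso_ltr[OF a] a unfolding order_iso_def by auto
  then show ?thesis by (simp add: nl_def)
qed

lemma nlf_sorted: "sorted_wrt (<) ys \<Longrightarrow> \<forall>a\<in>set ys. \<forall>z\<in>M. z < a \<Longrightarrow> nlf M ys = 0"
proof (induction ys arbitrary: M)
  case (Cons y ys)
  have "\<not>(\<exists>z\<in>M. y \<le> z)" using Cons.prems by force
  moreover have "nlf (insert y M) ys = 0" using Cons by auto
  ultimately show ?case by simp
qed simp

lemma nlf_zero: "nlf M ys = 0 \<Longrightarrow> sorted_wrt (<) ys \<and> (\<forall>a\<in>set ys. \<forall>z\<in>M. z < a)"
proof (induction ys arbitrary: M)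
  case (Cons y ys)
  have 1: "\<not>(\<exists>z\<in>M. y \<le> z)" and 2: "nlf (insert y M) ys = 0"
    using Cons.prems by (auto split: if_splits)
  from Cons.IH[OF 2] 1 show ?case by force
qed simp

lemma perm_shuffle: "is_perm n (A @ [x] @ B @ C) \<longleftrightarrow> is_perm n (A @ B @ [x] @ C)"
proof -
  have "set (A @ [x] @ B @ C) = set (A @ B @ [x] @ C)" by auto
  moreover have "distinct (A @ [x] @ B @ C) = distinct (A @ B @ [x] @ C)" by auto
  moreover have "length (A @ [x] @ B @ C) = length (A @ B @ [x] @ C)" by simp
  ultimately show ?thesis unfolding is_perm_def by simp
qed

lemma rj_decomp:
  assumes "i < j" "j < length \<sigma>"
  shows "\<sigma> = take i \<sigma> @ [\<sigma>!i] @ take (j-i) (drop (Suc i) \<sigma>) @ drop (Suc j) \<sigma>"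
proof -
  have "\<sigma> = take i \<sigma> @ [\<sigma>!i] @ drop (Suc i) \<sigma>"
    using assms by (simp add: id_take_nth_drop)
  moreover have "drop (Suc i) \<sigma> = take (j-i) (drop (Suc i) \<sigma>) @ drop (Suc j) \<sigma>"
    using assms by (metis Suc_leI append_take_drop_id drop_drop le_add_diff_inverse2 add_Suc_right less_imp_le)
  ultimately show ?thesis by simp
qed

lemma nl_shuffle: "nl (A @ B @ [x] @ C) \<le> nl (A @ [x] @ B @ C) + 1"
proof -
  have L: "nlf {} (A @ B @ [x] @ C) = nlf {} A + nlf (set A) B + nlf (set A \<union> set B) [x] + nlf (set A \<union> set B \<union> {x}) C"
    by (simp only: nlf_append) (simp add: Un_assoc)
  have R: "nlf {} (A @ [x] @ B @ C) = nlf {} A + nlf (set A) [x] + nlf (set A \<union> {x}) B + nlf (set A \<union> {x} \<union> set B) C"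
    by (simp only: nlf_append) (simp add: Un_assoc)
  have e: "set A \<union> set B \<union> {x} = set A \<union> {x} \<union> set B" by auto
  have "nlf (set A) B \<le> nlf (set A \<union> {x}) B" by (rule nlf_mono) auto
  moreover have "nlf (set A \<union> set B) [x] \<le> 1" by simp
  ultimately show ?thesis unfolding nl_nlf L R e by linarith
qed

lemma rj_props:
  assumes "is_perm n \<sigma>" "rj_step \<sigma> \<tau>"
  shows "is_perm n \<tau> \<and> nl \<tau> \<le> nl \<sigma> + 1"
proof -
  obtain i j where ij: "i < j" "j < length \<sigma>" "\<tau> = right_jump \<sigma> i j"
    using assms(2) unfolding rj_step_def by blast
  define A where "A = take i \<sigma>"
  define B where "B = take (j-i) (drop (Suc i) \<sigma>)"
  define C where "C = drop (Suc j) \<sigma>"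
  define x where "x = \<sigma>!i"
  have s: "\<sigma> = A @ [x] @ B @ C" unfolding A_def B_def C_def x_def using rj_decomp[OF ij(1,2)] .
  have t: "\<tau> = A @ B @ [x] @ C" unfolding A_def B_def C_def x_def ij(3) right_jump_def by simp
  have "is_perm n (A @ [x] @ B @ C)" using assms(1) s by simp
  then have "is_perm n (A @ B @ [x] @ C)" using perm_shuffle by blast
  moreover have "nl (A @ B @ [x] @ C) \<le> nl (A @ [x] @ B @ C) + 1" by (rule nl_shuffle)
  ultimately show ?thesis using s t by simp
qed

lemma Cp_sub: "(rj_step^^k) xs \<sigma> \<Longrightarrow> is_perm n xs \<Longrightarrow> is_perm n \<sigma> \<and> nl \<sigma> \<le> nl xs + k"
proof (induction k arbitrary: \<sigma>)
  case 0 then show ?case by simp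
next
  case (Suc k)
  from Suc.prems(1) obtain \<tau> where "(rj_step^^k) xs \<tau>" "rj_step \<tau> \<sigma>" by (rule relpowp_Suc_E)
  with Suc.IH Suc.prems(2) rj_props[of n \<tau> \<sigma>] show ?case by fastforce
qed

lemma id_perm: "is_perm n [1..<Suc n]" unfolding is_perm_def by auto

lemma nl_id: "nl [1..<Suc n] = 0"
  unfolding nl_nlf by (rule nlf_sorted) (auto simp: strict_sorted_iff simp del: upt_Suc)

lemma filter_split: "sorted_wrt (<) A \<Longrightarrow> A = filter (\<lambda>a. a < x) A @ filter (\<lambda>a. \<not> a < (x::nat)) A"
proof (induction A)
  case (Cons a A)
  show ?case
  proof (cases "a < x")
    case True then show ?thesis using Cons by simp
  next
    case False
    then have "\<forall>b\<in>set A. \<not> b < x" using Cons.prems by auto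
    then have "filter (\<lambda>a. a < x) A = []" "filter (\<lambda>a. \<not> a < x) A = A"
      by (auto simp: filter_empty_conv)
    then show ?thesis using False by simp
  qed
qed simp

lemma reach: "is_perm n \<sigma> \<Longrightarrow> nl \<sigma> = m \<Longrightarrow> (rj_step^^m) [1..<Suc n] \<sigma>"
proof (induction m arbitrary: \<sigma>)
  case 0
  then have "sorted_wrt (<) \<sigma>" using nlf_zero[of "{}" \<sigma>] by (simp add: nl_nlf)
  then have "\<sigma> = [1..<Suc n]" using 0 unfolding is_perm_def
    by (intro sorted_distinct_set_unique) (auto simp: strict_sorted_iff simp del: upt_Suc)
  then show ?case by simp
next
  case (Suc m)
  define P where "P = (\<lambda>k. 0 < nlf {} (take k \<sigma>))"
  have Pl: "P (length \<sigma>)" unfolding P_def using Suc.prems by (simp add: nl_nlf)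
  define k0 where "k0 = (LEAST k. P k)"
  have Pk0: "P k0" unfolding k0_def using Pl by (rule LeastI)
  have k0le: "k0 \<le> length \<sigma>" unfolding k0_def using Pl by (rule Least_le)
  have k0pos: "k0 > 0" using Pk0 unfolding P_def by (cases k0) auto
  have nP: "\<not> P (k0 - 1)" unfolding k0_def by (rule not_less_Least) (use k0pos k0_def in auto)
  define A where "A = take (k0 - 1) \<sigma>"
  define x where "x = \<sigma> ! (k0 - 1)"
  define C where "C = drop k0 \<sigma>"
  have kk: "Suc (k0 - 1) = k0" using k0pos by simp
  have tk: "take k0 \<sigma> = A @ [x]" unfolding A_def x_def
    using take_Suc_conv_app_nth[of "k0-1" \<sigma>] k0le kk by simp
  have "\<sigma> = take k0 \<sigma> @ drop k0 \<sigma>" by simp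
  then have sig: "\<sigma> = A @ x # C" using tk unfolding C_def by simp
  have A0: "nlf {} A = 0" using nP unfolding P_def A_def by simp
  have ex: "\<exists>z\<in>set A. x \<le> z" using Pk0 A0 unfolding P_def tk by (auto simp: nlf_snoc split: if_splits)
  have sA: "sorted_wrt (<) A" using nlf_zero[OF A0] by simp
  have dist: "distinct \<sigma>" using Suc.prems unfolding is_perm_def by simp
  then have xA: "x \<notin> set A" using sig by simp
  define A1 where "A1 = filter (\<lambda>a. a < x) A"
  define A2 where "A2 = filter (\<lambda>a. \<not> a < x) A"
  have AA: "A = A1 @ A2" unfolding A1_def A2_def by (rule filter_split[OF sA])
  define \<sigma>' where "\<sigma>' = A1 @ [x] @ A2 @ C"
  have "is_perm n (A1 @ A2 @ [x] @ C)" using Suc.prems(1) sig AA by simp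
  then have perm': "is_perm n \<sigma>'" unfolding \<sigma>'_def using perm_shuffle[of n A1 x A2 C] by simp
  have s1: "sorted_wrt (<) A1" "sorted_wrt (<) A2" unfolding A1_def A2_def
    using sA by (auto simp: sorted_wrt_filter)
  have A2gt: "\<forall>a\<in>set A2. x < a" using xA unfolding A2_def by auto (metis linorder_neqE_nat)
  have A1lt: "\<forall>a\<in>set A1. a < x" unfolding A1_def by auto
  have srt2: "sorted_wrt (<) ([x] @ A2)" using s1(2) A2gt by simp
  have "\<forall>a\<in>set A1. \<forall>b\<in>set ([x] @ A2). a < b"
  proof (intro ballI)
    fix a b assume "a \<in> set A1" "b \<in> set ([x] @ A2)"
    then have "a < x" "b = x \<or> x < b" using A1lt A2gt by auto
    then show "a < b" by auto
  qed
  then have srt: "sorted_wrt (<) (A1 @ [x] @ A2)"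
    using s1(1) srt2 sorted_wrt_append[of "(<)" A1 "[x] @ A2"] by blast
  have nl1: "nlf {} (A1 @ [x] @ A2) = 0" by (rule nlf_sorted[OF srt]) simp
  have setE: "set (A1 @ [x] @ A2) = set A \<union> {x}" using AA by auto
  have "nl \<sigma>' = nlf (set A \<union> {x}) C"
    unfolding nl_nlf \<sigma>'_def using nl1 setE nlf_append[of "{}" "A1 @ [x] @ A2" C] by simp
  moreover have "nl \<sigma> = 1 + nlf (set A \<union> {x}) C"
    unfolding nl_nlf sig using A0 ex by (simp add: nlf_append)
  ultimately have nl': "nl \<sigma>' = m" using Suc.prems(2) by simp
  have A2ne: "A2 \<noteq> []" using ex xA unfolding A2_def by (auto simp: filter_empty_conv not_less)
  have rj: "rj_step \<sigma>' \<sigma>" unfolding rj_step_def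
  proof (intro exI conjI)
    show "length A1 < length A1 + length A2" using A2ne by simp
    show "length A1 + length A2 < length \<sigma>'" unfolding \<sigma>'_def by simp
    show "\<sigma> = right_jump \<sigma>' (length A1) (length A1 + length A2)"
      unfolding right_jump_def \<sigma>'_def sig AA by simp
  qed
  show ?case using Suc.IH[OF perm' nl'] rj by (rule relpowp_Suc_I)
qed

lemma Cp_char: "\<sigma> \<in> Cp p \<longleftrightarrow> is_perm (length \<sigma>) \<sigma> \<and> nl \<sigma> \<le> p"
proof
  assume "\<sigma> \<in> Cp p"
  then obtain n k where k: "k \<le> p" "(rj_step ^^ k) [1..<Suc n] \<sigma>" unfolding Cp_def by blast
  from Cp_sub[OF k(2) id_perm] nl_id k(1) have "is_perm n \<sigma>" "nl \<sigma> \<le> p" by auto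
  then show "is_perm (length \<sigma>) \<sigma> \<and> nl \<sigma> \<le> p" by (simp add: is_perm_def)
next
  assume a: "is_perm (length \<sigma>) \<sigma> \<and> nl \<sigma> \<le> p"
  then show "\<sigma> \<in> Cp p" unfolding Cp_def using reach[of "length \<sigma>" \<sigma> "nl \<sigma>"] by blast
qed

lemma rank_perm:
  assumes "is_perm n \<sigma>" "a < n"
  shows "card {b. b < n \<and> \<sigma>!b \<le> \<sigma>!a} = \<sigma>!a"
proof -
  have len: "length \<sigma> = n" and d: "distinct \<sigma>" and s: "set \<sigma> = {1..n}"
    using assms(1) unfolding is_perm_def by auto
  have inj: "inj_on ((!) \<sigma>) {b. b < n \<and> \<sigma>!b \<le> \<sigma>!a}"
    by (rule inj_on_nth) (use d len in auto)
  have an: "\<sigma>!a \<le> n" using nth_mem[of a \<sigma>] assms(2) len s by auto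
  have img: "(!) \<sigma> ` {b. b < n \<and> \<sigma>!b \<le> \<sigma>!a} = {1..\<sigma>!a}"
  proof
    show "(!) \<sigma> ` {b. b < n \<and> \<sigma>!b \<le> \<sigma>!a} \<subseteq> {1..\<sigma>!a}"
    proof
      fix v assume "v \<in> (!) \<sigma> ` {b. b < n \<and> \<sigma>!b \<le> \<sigma>!a}"
      then obtain b where b: "b < n" "\<sigma>!b \<le> \<sigma>!a" "v = \<sigma>!b" by blast
      then have "v \<in> set \<sigma>" using len by auto
      then show "v \<in> {1..\<sigma>!a}" using b s by auto
    qed
    show "{1..\<sigma>!a} \<subseteq> (!) \<sigma> ` {b. b < n \<and> \<sigma>!b \<le> \<sigma>!a}"
    proof
      fix v assume v: "v \<in> {1..\<sigma>!a}"
      then have "v \<in> set \<sigma>" using s an by auto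
      then obtain b where "b < n" "\<sigma>!b = v" using len by (auto simp: in_set_conv_nth)
      then show "v \<in> (!) \<sigma> ` {b. b < n \<and> \<sigma>!b \<le> \<sigma>!a}" using v by auto
    qed
  qed
  show ?thesis using card_image[OF inj] img by simp
qed

lemma perm_iso_eq:
  assumes "is_perm n \<pi>" "is_perm n \<sigma>" "order_iso \<pi> \<sigma>"
  shows "\<pi> = \<sigma>"
proof (rule nth_equalityI)
  have lp: "length \<pi> = n" and ls: "length \<sigma> = n" using assms unfolding is_perm_def by auto
  then show "length \<pi> = length \<sigma>" by simp
  fix a assume "a < length \<pi>"
  then have a: "a < n" using lp by simp
  have "{b. b < n \<and> \<pi>!b \<le> \<pi>!a} = {b. b < n \<and> \<sigma>!b \<le> \<sigma>!a}"
  proof -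
    have "\<And>b. b < n \<Longrightarrow> (\<pi>!b \<le> \<pi>!a) = (\<sigma>!b \<le> \<sigma>!a)"
      using assms(3) a lp unfolding order_iso_def by (simp add: not_less[symmetric])
    then show ?thesis by blast
  qed
  then show "\<pi>!a = \<sigma>!a" using rank_perm[OF assms(1) a] rank_perm[OF assms(2) a] by simp
qed

lemma std_exists:
  assumes d: "distinct ys"
  shows "\<exists>\<pi>. is_perm (length ys) \<pi> \<and> order_iso \<pi> ys"
proof -
  define S where "S = set ys"
  define r where "r = (\<lambda>y::nat. card {z\<in>S. z \<le> y})"
  have fin: "finite S" unfolding S_def by simp
  have lt: "r y < r y'" if "y' \<in> S" "y < y'" for y y'
  proof -
    have a: "{z\<in>S. z \<le> y} \<subseteq> {z\<in>S. z \<le> y'}" using that by auto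
    have b: "y' \<in> {z\<in>S. z \<le> y'}" "y' \<notin> {z\<in>S. z \<le> y}" using that by auto
    have "{z\<in>S. z \<le> y} \<subset> {z\<in>S. z \<le> y'}" using a b by blast
    then show ?thesis unfolding r_def by (rule psubset_card_mono[rotated]) (use fin in simp)
  qed
  have le: "r y \<le> r y'" if "y \<le> y'" for y y'
    unfolding r_def by (rule card_mono) (use fin that in auto)
  have iff: "r y < r y' \<longleftrightarrow> y < y'" if "y' \<in> S" for y y'
    using lt[OF that] le[of y' y] by (meson leD not_le)
  define \<pi> where "\<pi> = map r ys"
  have inj: "inj_on r S"
  proof (rule inj_onI)
    fix y y' assume "y \<in> S" "y' \<in> S" "r y = r y'"
    then show "y = y'" using iff by (metis less_irrefl linorder_neqE_nat)
  qed
  have dp: "distinct \<pi>" unfolding \<pi>_def using d inj by (simp add: distinct_map S_def)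
  have cS: "card S = length ys" unfolding S_def using d by (rule distinct_card)
  have sub: "set \<pi> \<subseteq> {1..length ys}"
  proof
    fix v assume "v \<in> set \<pi>"
    then obtain y where y: "y \<in> S" "v = r y" unfolding \<pi>_def S_def by auto
    have "r y \<le> card S" unfolding r_def by (rule card_mono) (use fin in auto)
    moreover have "r y \<ge> 1"
    proof -
      have "{z\<in>S. z \<le> y} \<noteq> {}" using y by auto
      then show ?thesis unfolding r_def using fin by (simp add: Suc_le_eq card_gt_0_iff)
    qed
    ultimately show "v \<in> {1..length ys}" using y cS by auto
  qed
  have "card (set \<pi>) = length ys" using dp distinct_card[of \<pi>] unfolding \<pi>_def by simp
  then have "set \<pi> = {1..length ys}" using sub by (intro card_subset_eq) auto
  then have perm: "is_perm (length ys) \<pi>" unfolding is_perm_def \<pi>_def using dp \<pi>_def by simp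
  have "order_iso \<pi> ys" unfolding order_iso_def \<pi>_def
    using iff unfolding S_def by auto
  then show ?thesis using perm by blast
qed

lemma prefix_max: "l < length \<sigma> \<Longrightarrow> \<exists>a\<le>l. ltr_max \<sigma> a \<and> \<sigma>!l \<le> \<sigma>!a"
proof (induction l rule: less_induct)
  case (less l)
  show ?case
  proof (cases "ltr_max \<sigma> l")
    case True then show ?thesis by auto
  next
    case False
    then obtain k where k: "k < l" "\<sigma>!l \<le> \<sigma>!k" using not_ltr by auto
    then obtain a where "a \<le> k" "ltr_max \<sigma> a" "\<sigma>!k \<le> \<sigma>!a" using less by fastforce
    then show ?thesis using k by (meson le_trans less_imp_le_nat)
  qed
qed

definition D :: "nat list \<Rightarrow> nat \<Rightarrow> bool" where
  "D \<sigma> m \<longleftrightarrow> (\<exists>i<length \<sigma>. \<not> ltr_max \<sigma> i \<and> (\<forall>j<i. j \<noteq> m \<longrightarrow> \<sigma>!j < \<sigma>!i))"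

lemma D_wit:
  assumes "distinct \<sigma>" "i < length \<sigma>" "\<not> ltr_max \<sigma> i" "\<forall>j<i. j \<noteq> m \<longrightarrow> \<sigma>!j < \<sigma>!i"
  shows "m < i \<and> \<sigma>!i < \<sigma>!m"
proof -
  obtain k where k: "k<i" "\<sigma>!i \<le> \<sigma>!k" using assms(3) not_ltr by auto
  have km: "k = m" using k assms(4) leD by blast
  have "k < length \<sigma>" using k assms(2) by simp
  then have "\<sigma>!i \<noteq> \<sigma>!k" using assms(1,2) k(1) nth_eq_iff_index_eq[of \<sigma> i k] by auto
  then show ?thesis using k km by auto
qed

lemma core:
  assumes P: "is_perm n \<sigma>" and n1: "n \<ge> 1"
  shows "(\<forall>m<n. ltr_max \<sigma> m \<longrightarrow> D \<sigma> m) \<longleftrightarrow>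
    ((\<exists>i < n. \<sigma> ! i = n - 1 \<and> \<not> ltr_max \<sigma> i) \<and>
    (1 < n \<and> \<not> ltr_max \<sigma> 1) \<and>
    (\<forall>i j k. i < j \<and> j < k \<and> k < n \<and> ltr_max \<sigma> i \<and> ltr_max \<sigma> j \<and> ltr_max \<sigma> k \<and>
        (\<forall>l. i < l \<and> l < k \<and> l \<noteq> j \<longrightarrow> \<not> ltr_max \<sigma> l) \<longrightarrow>
        (\<exists>t. j < t \<and> t < k \<and> \<not> ltr_max \<sigma> t \<and> \<sigma> ! t > \<sigma> ! i)))"
proof -
  have len: "length \<sigma> = n" and dist: "distinct \<sigma>" and st: "set \<sigma> = {1..n}"
    using P unfolding is_perm_def by auto
  have vals: "1 \<le> \<sigma>!i \<and> \<sigma>!i \<le> n" if "i < n" for i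
  proof -
    have "\<sigma>!i \<in> set \<sigma>" using that len by simp
    then show ?thesis using st by auto
  qed
  have inj: "i = j" if "i < n" "j < n" "\<sigma>!i = \<sigma>!j" for i j
    using that dist len by (simp add: nth_eq_iff_index_eq)
  have pos: "\<exists>i<n. \<sigma>!i = v" if "1 \<le> v" "v \<le> n" for v
  proof -
    have "v \<in> set \<sigma>" using st that by simp
    then show ?thesis using len by (auto simp: in_set_conv_nth)
  qed
  have ltr0: "ltr_max \<sigma> 0" unfolding ltr_max_def by simp
  obtain M where M: "M < n" "\<sigma>!M = n" using pos[of n] n1 by auto
  have ltrM: "ltr_max \<sigma> M" unfolding ltr_max_def
  proof (intro allI impI)
    fix k assume "k < M"
    then have kn: "k<n" "k\<noteq>M" using M by auto
    then have "\<sigma>!k \<noteq> n" using inj[of k M] M by auto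
    then show "\<sigma>!k < \<sigma>!M" using vals[OF kn(1)] M by auto
  qed
  have Dw: "m < i \<and> \<sigma>!i < \<sigma>!m"
    if "i < n" "\<not> ltr_max \<sigma> i" "\<forall>j<i. j \<noteq> m \<longrightarrow> \<sigma>!j < \<sigma>!i" for m i
    by (rule D_wit) (use that dist len in auto)
  show ?thesis
  proof
    assume AD: "\<forall>m<n. ltr_max \<sigma> m \<longrightarrow> D \<sigma> m"
    have iii: "1 < n \<and> \<not> ltr_max \<sigma> 1"
    proof -
      have "D \<sigma> 0" using AD ltr0 n1 by auto
      then obtain i where i: "i < n" "\<not> ltr_max \<sigma> i" "\<forall>j<i. j \<noteq> 0 \<longrightarrow> \<sigma>!j < \<sigma>!i"
        unfolding D_def len by auto
      have w: "0 < i \<and> \<sigma>!i < \<sigma>!0" using Dw[OF i] .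
      show ?thesis
      proof (cases "i = 1")
        case True then show ?thesis using i by auto
      next
        case False
        then have i1: "1 < i" using w by auto
        then have "\<sigma>!1 < \<sigma>!i" using i(3) by auto
        then have "\<not> ltr_max \<sigma> 1" using w unfolding ltr_max_def by auto
        then show ?thesis using i1 i(1) by auto
      qed
    qed
    have ii: "\<exists>i < n. \<sigma> ! i = n - 1 \<and> \<not> ltr_max \<sigma> i"
    proof -
      have b: "1 \<le> n - 1" "n - 1 \<le> n" using iii by auto
      obtain q where q: "q < n" "\<sigma>!q = n - 1" using pos[OF b] by blast
      have qM: "q \<noteq> M" using q M iii by auto
      have "D \<sigma> M" using AD ltrM M(1) by auto
      then obtain i where i: "i < n" "\<not> ltr_max \<sigma> i" "\<forall>j<i. j \<noteq> M \<longrightarrow> \<sigma>!j < \<sigma>!i"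
        unfolding D_def len by auto
      have w: "M < i \<and> \<sigma>!i < \<sigma>!M" using Dw[OF i] .
      have "M < q"
      proof (rule ccontr)
        assume "\<not> M < q"
        then have "q < M" using qM by auto
        then have "\<sigma>!q < \<sigma>!i" using i(3) w qM by auto
        then show False using q w M by auto
      qed
      then have "\<not> ltr_max \<sigma> q" unfolding ltr_max_def using q M by auto
      then show ?thesis using q by auto
    qed
    have iv: "\<forall>i j k. i < j \<and> j < k \<and> k < n \<and> ltr_max \<sigma> i \<and> ltr_max \<sigma> j \<and> ltr_max \<sigma> k \<and>
        (\<forall>l. i < l \<and> l < k \<and> l \<noteq> j \<longrightarrow> \<not> ltr_max \<sigma> l) \<longrightarrow>
        (\<exists>t. j < t \<and> t < k \<and> \<not> ltr_max \<sigma> t \<and> \<sigma> ! t > \<sigma> ! i)"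
    proof (intro allI impI)
      fix i j k assume a: "i < j \<and> j < k \<and> k < n \<and> ltr_max \<sigma> i \<and> ltr_max \<sigma> j \<and> ltr_max \<sigma> k \<and>
        (\<forall>l. i < l \<and> l < k \<and> l \<noteq> j \<longrightarrow> \<not> ltr_max \<sigma> l)"
      have "D \<sigma> j" using AD a by auto
      then obtain t where t: "t < n" "\<not> ltr_max \<sigma> t" "\<forall>l<t. l \<noteq> j \<longrightarrow> \<sigma>!l < \<sigma>!t"
        unfolding D_def len by auto
      have w: "j < t \<and> \<sigma>!t < \<sigma>!j" using Dw[OF t] .
      have jk: "\<sigma>!j < \<sigma>!k" using a unfolding ltr_max_def by auto
      have tk: "t < k"
      proof (rule ccontr)
        assume "\<not> t < k"
        moreover have "t \<noteq> k" using a t(2) by auto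
        ultimately have "k < t" by auto
        then have "\<sigma>!k < \<sigma>!t" using t(3) a by auto
        then show False using w jk by auto
      qed
      have "\<sigma>!i < \<sigma>!t" using t(3) a w by auto
      then show "\<exists>t. j < t \<and> t < k \<and> \<not> ltr_max \<sigma> t \<and> \<sigma> ! t > \<sigma> ! i" using w tk t(2) by auto
    qed
    show "(\<exists>i < n. \<sigma> ! i = n - 1 \<and> \<not> ltr_max \<sigma> i) \<and>
    (1 < n \<and> \<not> ltr_max \<sigma> 1) \<and>
    (\<forall>i j k. i < j \<and> j < k \<and> k < n \<and> ltr_max \<sigma> i \<and> ltr_max \<sigma> j \<and> ltr_max \<sigma> k \<and>
        (\<forall>l. i < l \<and> l < k \<and> l \<noteq> j \<longrightarrow> \<not> ltr_max \<sigma> l) \<longrightarrow>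
        (\<exists>t. j < t \<and> t < k \<and> \<not> ltr_max \<sigma> t \<and> \<sigma> ! t > \<sigma> ! i))"
      using ii iii iv by blast
  next
    assume C: "(\<exists>i < n. \<sigma> ! i = n - 1 \<and> \<not> ltr_max \<sigma> i) \<and>
    (1 < n \<and> \<not> ltr_max \<sigma> 1) \<and>
    (\<forall>i j k. i < j \<and> j < k \<and> k < n \<and> ltr_max \<sigma> i \<and> ltr_max \<sigma> j \<and> ltr_max \<sigma> k \<and>
        (\<forall>l. i < l \<and> l < k \<and> l \<noteq> j \<longrightarrow> \<not> ltr_max \<sigma> l) \<longrightarrow>
        (\<exists>t. j < t \<and> t < k \<and> \<not> ltr_max \<sigma> t \<and> \<sigma> ! t > \<sigma> ! i))"
    then obtain q where q: "q < n" "\<sigma>!q = n - 1" "\<not> ltr_max \<sigma> q" by auto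
    have iii: "1 < n" "\<not> ltr_max \<sigma> 1" using C by auto
    have iv: "\<exists>t. j < t \<and> t < k \<and> \<not> ltr_max \<sigma> t \<and> \<sigma> ! t > \<sigma> ! i"
      if "i < j" "j < k" "k < n" "ltr_max \<sigma> i" "ltr_max \<sigma> j" "ltr_max \<sigma> k"
         "\<forall>l. i < l \<and> l < k \<and> l \<noteq> j \<longrightarrow> \<not> ltr_max \<sigma> l" for i j k
      using C that by blast
    show "\<forall>m<n. ltr_max \<sigma> m \<longrightarrow> D \<sigma> m"
    proof (intro allI impI)
      fix m assume m: "m < n" "ltr_max \<sigma> m"
      show "D \<sigma> m"
      proof (cases "m = 0")
        case True
        then show ?thesis unfolding D_def len using iii by auto
      next
        case m0: False
        show ?thesis
        proof (cases "\<sigma>!m = n")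
          case True
          have "\<forall>j<q. j \<noteq> m \<longrightarrow> \<sigma>!j < \<sigma>!q"
          proof (intro allI impI)
            fix j assume j: "j < q" "j \<noteq> m"
            then have jn: "j < n" using q by auto
            have "\<sigma>!j \<noteq> n" using inj[of j m] j jn m True by auto
            moreover have "\<sigma>!j \<noteq> n - 1" using inj[of j q] j jn q by auto
            ultimately show "\<sigma>!j < \<sigma>!q" using vals[OF jn] q by auto
          qed
          then show ?thesis unfolding D_def len using q by auto
        next
          case False
          have Mm: "m < M"
          proof -
            have "M \<noteq> m" using M False by auto
            moreover have "\<not> M < m" using m(2) M False vals[OF m(1)] unfolding ltr_max_def by auto
            ultimately show ?thesis by auto
          qed
          define L where "L = {a. a < m \<and> ltr_max \<sigma> a}"
          define R where "R = {a. m < a \<and> a < n \<and> ltr_max \<sigma> a}"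
          have L0: "0 \<in> L" unfolding L_def using m0 ltr0 by auto
          have Lf: "finite L" unfolding L_def by auto
          have Rf: "finite R" unfolding R_def by auto
          have RM: "M \<in> R" unfolding R_def using Mm M ltrM by auto
          define i0 where "i0 = Max L"
          define k0 where "k0 = Min R"
          have i0L: "i0 \<in> L" unfolding i0_def using L0 Lf by (intro Max_in) auto
          have k0R: "k0 \<in> R" unfolding k0_def using RM Rf by (intro Min_in) auto
          have i0max: "a \<le> i0" if "a \<in> L" for a unfolding i0_def using Lf that by auto
          have k0min: "k0 \<le> a" if "a \<in> R" for a unfolding k0_def using Rf that by auto
          have gap: "\<forall>l. i0 < l \<and> l < k0 \<and> l \<noteq> m \<longrightarrow> \<not> ltr_max \<sigma> l"
          proof (intro allI impI)
            fix l assume l: "i0 < l \<and> l < k0 \<and> l \<noteq> m"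
            show "\<not> ltr_max \<sigma> l"
            proof
              assume lt: "ltr_max \<sigma> l"
              show False
              proof (cases "l < m")
                case True then have "l \<in> L" unfolding L_def using lt by auto
                then show False using i0max l by fastforce
              next
                case False then have "m < l" using l by auto
                moreover have "l < n" using l k0R unfolding R_def by auto
                ultimately have "l \<in> R" unfolding R_def using lt by auto
                then show False using k0min l by fastforce
              qed
            qed
          qed
          have i0m: "i0 < m" "ltr_max \<sigma> i0" using i0L unfolding L_def by auto
          have k0m: "m < k0" "k0 < n" "ltr_max \<sigma> k0" using k0R unfolding R_def by auto
          have ex: "\<exists>t. m < t \<and> t < k0 \<and> \<not> ltr_max \<sigma> t \<and> \<sigma>!t > \<sigma>!i0"
            using iv[OF i0m(1) k0m(1) k0m(2) i0m(2) m(2) k0m(3) gap] .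
          define T where "T = (\<lambda>t. m < t \<and> t < k0 \<and> \<not> ltr_max \<sigma> t \<and> \<sigma>!t > \<sigma>!i0)"
          define t0 where "t0 = (LEAST t. T t)"
          have Tt0: "T t0" unfolding t0_def using ex unfolding T_def by (rule LeastI_ex)
          have t0min: "\<not> T l" if "l < t0" for l using that unfolding t0_def by (rule not_less_Least)
          have t0n: "t0 < n" using Tt0 k0m unfolding T_def by auto
          have pref: "\<sigma>!l \<le> \<sigma>!i0" if l: "l < m" for l
          proof -
            obtain a where a: "a \<le> l" "ltr_max \<sigma> a" "\<sigma>!l \<le> \<sigma>!a"
              using prefix_max[of l \<sigma>] l m len by auto
            have "a \<in> L" unfolding L_def using a l by auto
            then have ai: "a \<le> i0" by (rule i0max)
            show "\<sigma>!l \<le> \<sigma>!i0"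
            proof (cases "a = i0")
              case True then show ?thesis using a by simp
            next
              case False
              then have "a < i0" using ai by auto
              then have "\<sigma>!a < \<sigma>!i0" using i0m(2) unfolding ltr_max_def by auto
              then show ?thesis using a by auto
            qed
          qed
          have big: "\<sigma>!i0 < \<sigma>!t0" using Tt0 unfolding T_def by auto
          have "\<forall>j<t0. j \<noteq> m \<longrightarrow> \<sigma>!j < \<sigma>!t0"
          proof (intro allI impI)
            fix l assume l: "l < t0" "l \<noteq> m"
            show "\<sigma>!l < \<sigma>!t0"
            proof (cases "l < m")
              case True then show ?thesis using pref[OF True] big by simp
            next
              case False
              then have ml: "m < l" using l by auto
              have lk: "l < k0" using l Tt0 unfolding T_def by auto
              have "\<not> ltr_max \<sigma> l" using gap ml lk i0m(1) l by auto
              moreover have "\<not> T l" using t0min l by auto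
              ultimately have "\<sigma>!l \<le> \<sigma>!i0" using ml lk unfolding T_def by auto
              then show ?thesis using big by auto
            qed
          qed
          then show ?thesis unfolding D_def len using t0n Tt0 unfolding T_def by auto
        qed
      qed
    qed
  qed
qed

lemma final:
  assumes P: "is_perm n \<sigma>" and n1: "n \<ge> 1"
  shows "\<sigma> \<in> basis p \<longleftrightarrow> card {i. i < n \<and> \<not> ltr_max \<sigma> i} = p + 1 \<and> (\<forall>m<n. ltr_max \<sigma> m \<longrightarrow> D \<sigma> m)"
proof -
  have len: "length \<sigma> = n" and dist: "distinct \<sigma>" using P unfolding is_perm_def by auto
  define N where "N = {i. i < n \<and> \<not> ltr_max \<sigma> i}"
  have NW: "W \<sigma> UNIV = N" unfolding N_def W_UNIV len ..
  have nlN: "nl \<sigma> = card N" using nl_W NW by simp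
  have finN: "finite N" unfolding N_def by auto
  have WN: "W \<sigma> I \<subseteq> N" for I using W_mono[of I UNIV \<sigma>] NW by auto
  have Wdel: "N - {m} \<subseteq> W \<sigma> (-{m})" if mN: "m \<in> N" for m
  proof
    fix i assume iN: "i \<in> N - {m}"
    from iN obtain k where k: "k < i" "\<sigma>!i \<le> \<sigma>!k" "i<n" "i \<noteq> m" unfolding N_def using not_ltr by auto
    show "i \<in> W \<sigma> (-{m})"
    proof (cases "k = m")
      case False then show ?thesis unfolding W_def using k len by auto
    next
      case True
      from mN obtain k' where k': "k' < m" "\<sigma>!m \<le> \<sigma>!k'" unfolding N_def using not_ltr by auto
      have "k' \<in> -{m}" "k' < i" "\<sigma>!i \<le> \<sigma>!k'" using k' k True by auto
      then show ?thesis unfolding W_def using k len by auto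
    qed
  qed
  have Wsmall: "W \<sigma> (-{m}) \<subseteq> N - {m}" for m using WN unfolding W_def by auto
  have Wltr: "(W \<sigma> (-{m}) \<noteq> N) \<longleftrightarrow> D \<sigma> m" if m: "m < n" "ltr_max \<sigma> m" for m
  proof -
    have "(W \<sigma> (-{m}) \<noteq> N) \<longleftrightarrow> (\<exists>i\<in>N. i \<notin> W \<sigma> (-{m}))" using WN by auto
    also have "\<dots> \<longleftrightarrow> D \<sigma> m"
    proof
      assume "\<exists>i\<in>N. i \<notin> W \<sigma> (-{m})"
      then obtain i where i: "i < n" "\<not> ltr_max \<sigma> i" "i \<notin> W \<sigma> (-{m})" unfolding N_def by auto
      have "i \<noteq> m" using i m by auto
      then have "\<forall>j<i. j \<noteq> m \<longrightarrow> \<sigma>!j < \<sigma>!i" using i len unfolding W_def by (auto simp: not_le)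
      then show "D \<sigma> m" unfolding D_def len using i by auto
    next
      assume "D \<sigma> m"
      then obtain i where i: "i < n" "\<not> ltr_max \<sigma> i" "\<forall>j<i. j \<noteq> m \<longrightarrow> \<sigma>!j < \<sigma>!i"
        unfolding D_def len by auto
      have "i \<notin> W \<sigma> (-{m})" using i unfolding W_def by (auto simp: not_le)
      then show "\<exists>i\<in>N. i \<notin> W \<sigma> (-{m})" using i unfolding N_def by auto
    qed
    finally show ?thesis .
  qed
  show ?thesis
  proof
    assume B: "\<sigma> \<in> basis p"
    have notC: "\<sigma> \<notin> Cp p" using B unfolding basis_def by auto
    then have gt: "card N > p" using Cp_char[of \<sigma> p] P len nlN by auto
    have del: "card (W \<sigma> (-{m})) \<le> p" if m: "m < n" for m
    proof -
      obtain \<pi> where \<pi>: "is_perm (length (nths \<sigma> (-{m}))) \<pi>" "order_iso \<pi> (nths \<sigma> (-{m}))"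
        using std_exists[of "nths \<sigma> (-{m})"] dist by auto
      have "{i. i < length \<sigma> \<and> i \<in> -{m}} = {..<n} - {m}" using len by auto
      then have lnths: "length (nths \<sigma> (-{m})) = n - 1" using m by (simp add: length_nths)
      have lp: "length \<pi> = n - 1" using \<pi>(2) lnths unfolding order_iso_def by simp
      have "\<pi> \<noteq> \<sigma>" using lp len m by auto
      moreover have "is_pattern \<pi> \<sigma>" unfolding is_pattern_def using \<pi> lp lnths by auto
      ultimately have "\<pi> \<in> Cp p" using B unfolding basis_def by auto
      then have "nl \<pi> \<le> p" using Cp_char by auto
      then show "card (W \<sigma> (-{m})) \<le> p" using iso_nl[OF \<pi>(2)] nl_nths by simp
    qed
    obtain m where mN: "m \<in> N" using gt by (metis card.empty ex_in_conv less_nat_zero_code)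
    have mn: "m < n" using mN unfolding N_def by auto
    have "card (N - {m}) \<le> card (W \<sigma> (-{m}))" using Wdel[OF mN] W_finite by (rule card_mono[rotated])
    then have "card (N - {m}) \<le> p" using del[OF mn] by simp
    then have "card N \<le> p + 1" using finN mN by (simp add: card_Diff_singleton)
    then have cN: "card N = p + 1" using gt by auto
    have "\<forall>m<n. ltr_max \<sigma> m \<longrightarrow> D \<sigma> m"
    proof (intro allI impI)
      fix m assume m: "m<n" "ltr_max \<sigma> m"
      have "W \<sigma> (-{m}) \<noteq> N" using del[OF m(1)] cN by auto
      then show "D \<sigma> m" using Wltr[OF m] by blast
    qed
    then show "card {i. i < n \<and> \<not> ltr_max \<sigma> i} = p + 1 \<and> (\<forall>m<n. ltr_max \<sigma> m \<longrightarrow> D \<sigma> m)"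
      using cN unfolding N_def by simp
  next
    assume A: "card {i. i < n \<and> \<not> ltr_max \<sigma> i} = p + 1 \<and> (\<forall>m<n. ltr_max \<sigma> m \<longrightarrow> D \<sigma> m)"
    then have cN: "card N = p+1" unfolding N_def by simp
    have del: "card (W \<sigma> (-{m})) \<le> p" if m: "m<n" for m
    proof (cases "ltr_max \<sigma> m")
      case True
      then have "W \<sigma> (-{m}) \<noteq> N" using Wltr[OF m] A m by auto
      then have "W \<sigma> (-{m}) \<subset> N" using WN by auto
      then have "card (W \<sigma> (-{m})) < card N" using finN by (simp add: psubset_card_mono)
      then show ?thesis using cN by simp
    next
      case False
      then have mN: "m \<in> N" using m unfolding N_def by simp
      have "card (W \<sigma> (-{m})) \<le> card (N - {m})" using Wsmall[of m] finN by (intro card_mono) auto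
      then show ?thesis using cN mN finN by simp
    qed
    have "\<sigma> \<notin> Cp p" using Cp_char nlN cN by simp
    moreover have "\<forall>\<pi>. is_pattern \<pi> \<sigma> \<and> \<pi> \<noteq> \<sigma> \<longrightarrow> \<pi> \<in> Cp p"
    proof (intro allI impI)
      fix \<pi> assume a: "is_pattern \<pi> \<sigma> \<and> \<pi> \<noteq> \<sigma>"
      then obtain I where pi: "is_perm (length \<pi>) \<pi>" "order_iso \<pi> (nths \<sigma> I)" unfolding is_pattern_def by auto
      have "\<exists>m<n. m \<notin> I"
      proof (rule ccontr)
        assume "\<not> (\<exists>m<n. m \<notin> I)"
        then have "nths \<sigma> I = \<sigma>" using len by (intro nths_all) auto
        then have oi: "order_iso \<pi> \<sigma>" using pi by simp
        then have "length \<pi> = n" using len unfolding order_iso_def by simp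
        then have "\<pi> = \<sigma>" using perm_iso_eq[of n \<pi> \<sigma>] pi P oi by simp
        then show False using a by simp
      qed
      then obtain m where m: "m<n" "m \<notin> I" by auto
      have "W \<sigma> I \<subseteq> W \<sigma> (-{m})" using m by (intro W_mono) auto
      then have "card (W \<sigma> I) \<le> p" using del[OF m(1)] W_finite by (meson card_mono le_trans)
      then have "nl \<pi> \<le> p" using iso_nl[OF pi(2)] nl_nths by simp
      then show "\<pi> \<in> Cp p" using Cp_char pi(1) by simp
    qed
    ultimately show "\<sigma> \<in> basis p" unfolding basis_def using P len by simp
  qed
qed

theorem mainTheorem4:
  fixes p n :: nat and \<sigma> :: "nat list"
  assumes "n \<ge> 1" and "is_perm n \<sigma>"
  shows "\<sigma> \<in> basis p \<longleftrightarrow>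
    card {i. i < n \<and> \<not> ltr_max \<sigma> i} = p + 1 \<and>
    (\<exists>i < n. \<sigma> ! i = n - 1 \<and> \<not> ltr_max \<sigma> i) \<and>
    (1 < n \<and> \<not> ltr_max \<sigma> 1) \<and>
    (\<forall>i j k. i < j \<and> j < k \<and> k < n \<and> ltr_max \<sigma> i \<and> ltr_max \<sigma> j \<and> ltr_max \<sigma> k \<and>
        (\<forall>l. i < l \<and> l < k \<and> l \<noteq> j \<longrightarrow> \<not> ltr_max \<sigma> l) \<longrightarrow>
        (\<exists>t. j < t \<and> t < k \<and> \<not> ltr_max \<sigma> t \<and> \<sigma> ! t > \<sigma> ! i))"
  using final[OF assms(2,1), of p] core[OF assms(2,1)] by blast

end
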